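(* Let $f$ be a planar discrete curve and $c\in\mathcal{P}^\pm$ a circle congruence along $f$ lying in a linear complex $\overline{\mathfrak{m}}$, i.e. $\langle\mathfrak{c}_i,\overline{\mathfrak{m}}\rangle=0$ for all $i$. Then the M-inversions $\sigma_{r_{ij}}$ in $$\mathfrak{r}_{ij}:=\mathfrak{c}_i\langle\mathfrak{c}_j,\mathfrak{p}\rangle-\mathfrak{c}_j\langle\mathfrak{c}_i,\mathfrak{p}\rangle$$ form an $(\overline{\mathfrak{m}})$-type Darboux evolution map for $f$ if and only if there exists a tangential circle congruence $t:\mathcal{E}\to\mathbb{P}(\mathcal{L})$, i.e. circles $t_{ij}$ with $\mathfrak{t}_{ij}\perp\mathfrak{f}_i,\mathfrak{f}_j,\mathfrak{c}_i,\mathfrak{c}_j$ for every edge $(ij)$.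
   Context: Planar light cone model: $\mathbb{R}^{3,2}$ with form of signature $(3,2)$, light cone $\mathcal{L}$; fixed $\mathfrak{p}$ with $\langle\mathfrak{p},\mathfrak{p}\rangle=-1$; $v$ with $\langle\mathfrak{v},\mathfrak{p}\rangle=0$ are points of $\mathbb{R}^2\cup\{\infty\}$, others oriented circles/lines; oriented contact = orthogonality. Inversion in $\mathfrak{a}$: $\sigma_a(x)=x-\frac{2\langle x,\mathfrak{a}\rangle}{\langle\mathfrak{a},\mathfrak{a}\rangle}\mathfrak{a}$; M-inversion if $\mathfrak{a}\perp\mathfrak{p}$. A discrete curve $f:\mathcal{V}\to\mathbb{P}(\mathcal{L})$ maps consecutive integers to points; $\mathcal{E}$ its edges. $\mathcal{P}^\pm_i:=\{\mathfrak{f}_{i-1},\mathfrak{f}_{i+1}\}^\perp\cap\mathcal{L}$ (circles through $f_{i-1},f_{i+1}$); a circle congruence $c\in\mathcal{P}^\pm$ chooses $c_i$ in this pencil at each vertex. An evolution map of $f$ assigns to each edge $(ij)$ an M-inversion $\sigma_{ij}$ with $\sigma_{ij}(f_i)=f_j$; it is of $(\mathfrak{m})$-type if all elements of the 2-dimensional space $\mathrm{span}\{\mathfrak{m},\mathfrak{p}\}$ are fixed by all $\sigma_{ij}$. It is an $(\mathfrak{m})$-type Darboux evolution map if moreover it evolves a circle congruence $c\in\mathcal{P}^\pm$: $\sigma_{ij}(\mathfrak{c}_i)=\mathfrak{c}_j$ for representatives with $\langle\mathfrak{c}_i,\mathfrak{p}\rangle=\langle\mathfrak{c}_j,\mathfrak{p}\rangle=-1$.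 *)

theory Defs
  imports "HOL-Analysis.Analysis"
begin

text \<open>The space R^{3,2}: real^5 with the symmetric bilinear form of signature (3,2).\<close>
type_synonym R32 = "real^5"

definition lf :: "R32 \<Rightarrow> R32 \<Rightarrow> real" where
  "lf x y = x$1*y$1 + x$2*y$2 + x$3*y$3 - x$4*y$4 - x$5*y$5"

text \<open>Homogeneous representative of a point of P(L): a nonzero null vector.\<close>
definition in_light_cone :: "R32 \<Rightarrow> bool" where
  "in_light_cone x \<longleftrightarrow> x \<noteq> 0 \<and> lf x x = 0"

definition proj_eq :: "R32 \<Rightarrow> R32 \<Rightarrow> bool" where
  "proj_eq x y \<longleftrightarrow> (\<exists>l. l \<noteq> 0 \<and> x = l *\<^sub>R y)"

definition inversion :: "R32 \<Rightarrow> R32 \<Rightarrow> R32" where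
  "inversion a x = x - (2 * lf x a / lf a a) *\<^sub>R a"

definition is_M_inversion :: "R32 \<Rightarrow> (R32 \<Rightarrow> R32) \<Rightarrow> bool" where
  "is_M_inversion p s \<longleftrightarrow> (\<exists>a. lf a p = 0 \<and> lf a a \<noteq> 0 \<and> s = inversion a)"

text \<open>Planar discrete curve on the vertex set of all integers: each f i represents a point
  of the plane (null and orthogonal to p). Edges are (i, i+1).\<close>
definition discrete_curve :: "R32 \<Rightarrow> (int \<Rightarrow> R32) \<Rightarrow> bool" where
  "discrete_curve p f \<longleftrightarrow> (\<forall>i. in_light_cone (f i) \<and> lf (f i) p = 0)"

text \<open>Circle congruence c in P^{+-}: c i lies in {f(i-1), f(i+1)}^perp intersected with L.\<close>
definition circle_congr_P :: "(int \<Rightarrow> R32) \<Rightarrow> (int \<Rightarrow> R32) \<Rightarrow> bool" where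
  "circle_congr_P f c \<longleftrightarrow>
     (\<forall>i. in_light_cone (c i) \<and> lf (c i) (f (i - 1)) = 0 \<and> lf (c i) (f (i + 1)) = 0)"

text \<open>Evolution map: sigma i is the M-inversion attached to the edge (i, i+1),
  mapping the point f i to the point f (i+1).\<close>
definition evolution_map :: "R32 \<Rightarrow> (int \<Rightarrow> R32) \<Rightarrow> (int \<Rightarrow> R32 \<Rightarrow> R32) \<Rightarrow> bool" where
  "evolution_map p f \<sigma> \<longleftrightarrow>
     (\<forall>i. is_M_inversion p (\<sigma> i) \<and> proj_eq (\<sigma> i (f i)) (f (i + 1)))"

definition m_type :: "R32 \<Rightarrow> R32 \<Rightarrow> (int \<Rightarrow> R32 \<Rightarrow> R32) \<Rightarrow> bool" where
  "m_type p m \<sigma> \<longleftrightarrow> (\<forall>i. \<forall>x \<in> span {m, p}. \<sigma> i x = x)"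

definition m_type_darboux_evolution_map ::
  "R32 \<Rightarrow> R32 \<Rightarrow> (int \<Rightarrow> R32) \<Rightarrow> (int \<Rightarrow> R32) \<Rightarrow> (int \<Rightarrow> R32 \<Rightarrow> R32) \<Rightarrow> bool" where
  "m_type_darboux_evolution_map p m f c \<sigma> \<longleftrightarrow>
     evolution_map p f \<sigma> \<and> m_type p m \<sigma> \<and> circle_congr_P f c \<and>
     (\<forall>i ci cj. proj_eq ci (c i) \<and> proj_eq cj (c (i + 1)) \<and> lf ci p = -1 \<and> lf cj p = -1
        \<longrightarrow> \<sigma> i ci = cj)"

definition r_vec :: "R32 \<Rightarrow> (int \<Rightarrow> R32) \<Rightarrow> int \<Rightarrow> R32" where
  "r_vec p c i = lf (c (i + 1)) p *\<^sub>R c i - lf (c i) p *\<^sub>R c (i + 1)"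

text \<open>Tangential circle congruence t : E -> P(L), t i for the edge (i, i+1).\<close>
definition tangential_congr :: "(int \<Rightarrow> R32) \<Rightarrow> (int \<Rightarrow> R32) \<Rightarrow> (int \<Rightarrow> R32) \<Rightarrow> bool" where
  "tangential_congr f c t \<longleftrightarrow>
     (\<forall>i. in_light_cone (t i) \<and> lf (t i) (f i) = 0 \<and> lf (t i) (f (i + 1)) = 0
          \<and> lf (t i) (c i) = 0 \<and> lf (t i) (c (i + 1)) = 0)"

end

theory Submission
  imports Defs
begin

lemma exhaust_5':
  fixes x :: 5
  shows "x = 1 \<or> x = 2 \<or> x = 3 \<or> x = 4 \<or> x = 5"
proof (induct x)
  case (of_int z)
  then have "z = 0 \<or> z = 1 \<or> z = 2 \<or> z = 3 \<or> z = 4" by fastforce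
  then show ?case by auto
qed

lemma forall_5': "(\<forall>i::5. P i) \<longleftrightarrow> P 1 \<and> P 2 \<and> P 3 \<and> P 4 \<and> P 5"
  by (metis exhaust_5')

lemma lf_sym: "lf x y = lf y x" by (simp add: lf_def algebra_simps)
lemma lf_add1[simp]: "lf (x+y) z = lf x z + lf y z" by (simp add: lf_def algebra_simps)
lemma lf_add2[simp]: "lf z (x+y) = lf z x + lf z y" by (simp add: lf_def algebra_simps)
lemma lf_diff1[simp]: "lf (x-y) z = lf x z - lf y z" by (simp add: lf_def algebra_simps)
lemma lf_diff2[simp]: "lf z (x-y) = lf z x - lf z y" by (simp add: lf_def algebra_simps)
lemma lf_scale1[simp]: "lf (a *\<^sub>R x) y = a * lf x y" by (simp add: lf_def algebra_simps)
lemma lf_scale2[simp]: "lf y (a *\<^sub>R x) = a * lf y x" by (simp add: lf_def algebra_simps)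
lemma lf_neg1[simp]: "lf (- x) y = - lf x y" by (simp add: lf_def algebra_simps)
lemma lf_neg2[simp]: "lf y (- x) = - lf y x" by (simp add: lf_def algebra_simps)
lemma lf_zero1[simp]: "lf 0 y = 0" by (simp add: lf_def)
lemma lf_zero2[simp]: "lf y 0 = 0" by (simp add: lf_def)

lemma iso3:
  assumes "lf x x = 0" "lf y y = 0" "lf z z = 0" "lf x y = 0" "lf x z = 0" "lf y z = 0"
  and indep: "\<And>a b c. a *\<^sub>R x + b *\<^sub>R y + c *\<^sub>R z = 0 \<Longrightarrow> a = 0 \<and> b = 0 \<and> c = 0"
  shows False
proof -
  define g where "g = (\<lambda>v::real^3. v$1 *\<^sub>R x + v$2 *\<^sub>R y + v$3 *\<^sub>R z)"
  define h where "h = (\<lambda>v::real^3. (\<chi> k::2. if k = 1 then g v $ 4 else g v $ 5))"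
  have lin: "linear h" unfolding h_def g_def
    by (auto intro!: linearI simp: vec_eq_iff algebra_simps)
  have "\<not> inj h"
  proof
    assume "inj h"
    then have "dim (range h) = dim (UNIV :: (real^3) set)"
      using dim_image_eq[OF lin, of UNIV] by (simp add: inj_on_def)
    moreover have "dim (range h) \<le> 2" using dim_subset_UNIV_cart[of "range h"] by simp
    ultimately show False by simp
  qed
  then obtain v where v: "v \<noteq> 0" "h v = 0" using linear_injective_0[OF lin] by auto
  define u where "u = g v"
  have "h v $ 1 = g v $ 4" "h v $ 2 = g v $ 5" by (simp_all add: h_def)
  then have u45: "u$4 = 0" "u$5 = 0" using v(2) unfolding u_def by simp_all
  have "lf u u = 0" unfolding u_def g_def using assms(1-6)
    by (simp add: lf_sym[of y x] lf_sym[of z x] lf_sym[of z y] algebra_simps)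
  then have "u$1^2 + u$2^2 + u$3^2 = 0" using u45 by (simp add: lf_def power2_eq_square)
  then have "u$1 = 0" "u$2 = 0" "u$3 = 0" by (smt (verit) zero_le_power2 power_zero_numeral zero_less_power2)+
  then have "u = 0" using u45 by (simp add: vec_eq_iff forall_5')
  then have "v$1 = 0 \<and> v$2 = 0 \<and> v$3 = 0" using indep[of "v$1" "v$2" "v$3"] unfolding u_def g_def by simp
  then have "v = 0" by (simp add: vec_eq_iff forall_3)
  then show False using v(1) by simp
qed

lemma keyK:
  assumes "t \<noteq> 0" "lf t t = 0" "lf w w = 0" "lf t w = 0" "lf a a = 0"
    "lf t a = 0" "lf w a = 0" "lf t b = 0" "lf w b = 0" "lf a b \<noteq> 0"
  shows "\<exists>l. w = l *\<^sub>R t"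
proof (rule ccontr)
  assume nd: "\<not> ?thesis"
  show False
  proof (rule iso3[of t w a])
    fix \<alpha> \<beta> \<gamma> assume eq: "\<alpha> *\<^sub>R t + \<beta> *\<^sub>R w + \<gamma> *\<^sub>R a = 0"
    have "lf (\<alpha> *\<^sub>R t + \<beta> *\<^sub>R w + \<gamma> *\<^sub>R a) b = 0" using eq by simp
    then have g: "\<gamma> = 0" using assms by simp
    have b: "\<beta> = 0"
    proof (rule ccontr)
      assume bn: "\<beta> \<noteq> 0"
      have e2: "\<beta> *\<^sub>R w = - (\<alpha> *\<^sub>R t)" using eq g by (simp add: eq_neg_iff_add_eq_0 add.commute)
      have "w = (1/\<beta>) *\<^sub>R (\<beta> *\<^sub>R w)" using bn by simp
      also have "\<dots> = (- \<alpha> / \<beta>) *\<^sub>R t" unfolding e2 by simp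
      finally have "w = (- \<alpha> / \<beta>) *\<^sub>R t" .
      then show False using nd by blast
    qed
    have "\<alpha> = 0" using eq g b assms(1) by simp
    then show "\<alpha> = 0 \<and> \<beta> = 0 \<and> \<gamma> = 0" using g b by simp
  qed (use assms in \<open>auto simp: lf_sym[of w t] lf_sym[of a t] lf_sym[of a w]\<close>)
qed


lemma edge_iff:
  assumes FF: "lf F F = 0" and Fn: "F \<noteq> 0" and GG: "lf G G = 0" and Gn: "G \<noteq> 0"
    and Fp: "lf F p = 0" and Gp: "lf G p = 0"
    and aa: "lf ci ci = 0" and bb: "lf cj cj = 0" and Fb: "lf F cj = 0" and Ga: "lf G ci = 0"
    and Pn: "lf ci p \<noteq> 0" and Qn: "lf cj p \<noteq> 0"
    and rr: "lf (lf cj p *\<^sub>R ci - lf ci p *\<^sub>R cj) (lf cj p *\<^sub>R ci - lf ci p *\<^sub>R cj) \<noteq> 0"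
  shows "proj_eq (inversion (lf cj p *\<^sub>R ci - lf ci p *\<^sub>R cj) F) G \<longleftrightarrow>
    (\<exists>t. in_light_cone t \<and> lf t F = 0 \<and> lf t G = 0 \<and> lf t ci = 0 \<and> lf t cj = 0)"
proof -
  define P where "P = lf ci p"
  define Q where "Q = lf cj p"
  define D where "D = lf ci cj"
  define r where "r = Q *\<^sub>R ci - P *\<^sub>R cj"
  have ba: "lf cj ci = D" using lf_sym D_def by metis
  have bF: "lf cj F = 0" "lf ci G = 0" using Fb Ga lf_sym by metis+
  have pF: "lf p F = 0" "lf p G = 0" "lf p ci = P" "lf p cj = Q" using Fp Gp lf_sym P_def Q_def by metis+
  have rr': "lf r r = -2 * P * Q * D" unfolding r_def using aa bb ba D_def by (simp add: algebra_simps)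
  have Dn: "D \<noteq> 0" using rr rr' P_def Q_def r_def by auto
  have Pn': "P \<noteq> 0" "Q \<noteq> 0" using Pn Qn P_def Q_def by auto
  define \<mu> where "\<mu> = lf F ci / D"
  define w where "w = F - \<mu> *\<^sub>R cj"
  have Fr: "lf F r = Q * lf F ci" unfolding r_def using Fb by simp
  have sig: "inversion r F = w + (\<mu> * Q / P) *\<^sub>R ci"
  proof -
    have "inversion r F = F - (2 * (Q * lf F ci) / (-2 * P * Q * D)) *\<^sub>R r"
      unfolding inversion_def Fr rr' ..
    also have "\<dots> = F + (lf F ci / (P * D)) *\<^sub>R r" using Pn' Dn by simp
    also have "\<dots> = w + (\<mu> * Q / P) *\<^sub>R ci"
      unfolding r_def w_def \<mu>_def using Pn' Dn by (simp add: algebra_simps scaleR_diff_right)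
    finally show ?thesis .
  qed
  have wa: "lf w ci = 0" unfolding w_def \<mu>_def using Dn ba by simp
  have wb: "lf w cj = 0" unfolding w_def using Fb bb by simp
  have ww: "lf w w = 0" unfolding w_def using FF Fb bF bb by simp
  have wF: "lf w F = 0" unfolding w_def using FF bF by simp
  have wp: "lf w p + \<mu> * Q = 0" unfolding w_def using Fp Q_def by simp
  have Fw: "F = w + \<mu> *\<^sub>R cj" unfolding w_def by simp
  show ?thesis unfolding r_def[symmetric] P_def[symmetric] Q_def[symmetric]
  proof
    assume "proj_eq (inversion r F) G"
    then obtain k where k: "k \<noteq> 0" "inversion r F = k *\<^sub>R G" unfolding proj_eq_def by auto
    have "lf w (inversion r F) = 0" unfolding sig using ww wa by simp
    then have wG: "lf w G = 0" using k by simp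
    have wn: "w \<noteq> 0"
    proof
      assume "w = 0"
      then have "\<mu> = 0" using wp Pn' by simp
      then show False using Fw \<open>w = 0\<close> Fn by simp
    qed
    show "\<exists>t. in_light_cone t \<and> lf t F = 0 \<and> lf t G = 0 \<and> lf t ci = 0 \<and> lf t cj = 0"
      using wn ww wF wG wa wb unfolding in_light_cone_def by blast
  next
    assume "\<exists>t. in_light_cone t \<and> lf t F = 0 \<and> lf t G = 0 \<and> lf t ci = 0 \<and> lf t cj = 0"
    then obtain t where t: "t \<noteq> 0" "lf t t = 0" "lf t F = 0" "lf t G = 0" "lf t ci = 0" "lf t cj = 0"
      unfolding in_light_cone_def by blast
    define \<nu> where "\<nu> = lf G cj / D"
    define w' where "w' = G - \<nu> *\<^sub>R ci"
    have w'a: "lf w' ci = 0" unfolding w'_def using Ga aa by simp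
    have w'b: "lf w' cj = 0" unfolding w'_def \<nu>_def using Dn D_def by simp
    have w'w': "lf w' w' = 0" unfolding w'_def using GG Ga bF aa by simp
    have w'p: "lf w' p + \<nu> * P = 0" unfolding w'_def using Gp P_def by simp
    have Gw: "G = w' + \<nu> *\<^sub>R ci" unfolding w'_def by simp
    have tw: "lf t w = 0" unfolding w_def using t by simp
    have tw': "lf t w' = 0" unfolding w'_def using t by simp
    obtain l where l: "w = l *\<^sub>R t"
      using keyK[of t w ci cj] t ww tw aa wa wb Dn D_def by auto
    obtain l' where l': "w' = l' *\<^sub>R t"
      using keyK[of t w' ci cj] t w'w' tw' aa w'a w'b Dn D_def by auto
    define u where "u = t - (lf t p / P) *\<^sub>R ci"
    have "\<mu> * Q = - l * lf t p" using wp l by simp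
    then have s2: "inversion r F = l *\<^sub>R u" unfolding sig u_def l using Pn'
      by (simp add: algebra_simps scaleR_diff_right)
    have "\<nu> = - l' * lf t p / P" using w'p l' Pn' by (simp add: field_simps)
    then have g2: "G = l' *\<^sub>R u" unfolding Gw u_def l' using Pn'
      by (simp add: algebra_simps scaleR_diff_right)
    have l'n: "l' \<noteq> 0" using g2 Gn by auto
    have "inversion r F = (l / l') *\<^sub>R G" unfolding s2 g2 using l'n by simp
    moreover have "l \<noteq> 0"
    proof
      assume "l = 0"
      then have "w = 0" using l by simp
      then have "\<mu> = 0" using wp Pn' by simp
      then show False using Fw \<open>w = 0\<close> Fn by simp
    qed
    ultimately show "proj_eq (inversion r F) G" unfolding proj_eq_def using l'n by (intro exI[of _ "l / l'"]) simp
  qed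
qed


lemma inversion_scale: "inversion r (k *\<^sub>R x) = k *\<^sub>R inversion r x"
  unfolding inversion_def by (simp add: algebra_simps)

lemma inversion_fix: "lf x r = 0 \<Longrightarrow> inversion r x = x"
  unfolding inversion_def by simp

lemma lhs_iff:
  fixes p mbar :: R32 and f c :: "int \<Rightarrow> R32"
  assumes "lf p p = -1"
    and cc: "circle_congr_P f c"
    and cm: "\<forall>i. lf (c i) mbar = 0"
    and cp: "\<forall>i. lf (c i) p \<noteq> 0"
    and rr: "\<forall>i. lf (r_vec p c i) (r_vec p c i) \<noteq> 0"
  shows "m_type_darboux_evolution_map p mbar f c (\<lambda>i. inversion (r_vec p c i))
         \<longleftrightarrow> (\<forall>i. proj_eq (inversion (r_vec p c i) (f i)) (f (i + 1)))"
proof -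
  have M: "is_M_inversion p (inversion (r_vec p c i))" for i
    unfolding is_M_inversion_def
    using rr by (intro exI[of _ "r_vec p c i"]) (simp add: r_vec_def lf_sym[of p "c i"] lf_sym[of p "c (i+1)"])
  have MT: "m_type p mbar (\<lambda>i. inversion (r_vec p c i))"
    unfolding m_type_def
  proof (intro allI ballI)
    fix i x assume x: "x \<in> span {mbar, p}"
    have "lf x (r_vec p c i) = 0"
    proof (rule span_induct[OF x])
      show "subspace {x. lf x (r_vec p c i) = 0}" unfolding subspace_def by simp
      fix y assume "y \<in> {mbar, p}"
      then show "lf y (r_vec p c i) = 0"
        using cm by (auto simp: r_vec_def lf_sym[of mbar] lf_sym[of p "c i"] lf_sym[of p "c (i+1)"])
    qed
    then show "inversion (r_vec p c i) x = x" by (rule inversion_fix)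
  qed
  have DB: "inversion (r_vec p c i) ci = cj"
    if h: "proj_eq ci (c i)" "proj_eq cj (c (i + 1))" "lf ci p = -1" "lf cj p = -1" for i ci cj
  proof -
    obtain k where k: "ci = k *\<^sub>R c i" using h(1) unfolding proj_eq_def by auto
    obtain k' where k': "cj = k' *\<^sub>R c (i+1)" using h(2) unfolding proj_eq_def by auto
    define P where "P = lf (c i) p"
    define Q where "Q = lf (c (i+1)) p"
    define D where "D = lf (c i) (c (i+1))"
    have kP: "k * P = -1" using h(3) k P_def by simp
    have kQ: "k' * Q = -1" using h(4) k' Q_def by simp
    have aa: "lf (c i) (c i) = 0" "lf (c (i+1)) (c (i+1)) = 0"
      using cc unfolding circle_congr_P_def in_light_cone_def by auto
    have ba: "lf (c (i+1)) (c i) = D" using lf_sym D_def by metis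
    have r: "r_vec p c i = Q *\<^sub>R c i - P *\<^sub>R c (i+1)" unfolding r_vec_def P_def Q_def ..
    have rr': "lf (r_vec p c i) (r_vec p c i) = -2 * P * Q * D" unfolding r using aa ba D_def
      by (simp add: algebra_simps)
    have Dn: "D \<noteq> 0" "P \<noteq> 0" "Q \<noteq> 0" using rr rr' cp P_def Q_def by auto
    have cr: "lf (c i) (r_vec p c i) = - P * D" unfolding r using aa D_def by simp
    have "inversion (r_vec p c i) (c i) = c i - (2 * (- P * D) / (-2 * P * Q * D)) *\<^sub>R r_vec p c i"
      unfolding inversion_def cr rr' ..
    also have "\<dots> = c i - (1 / Q) *\<^sub>R r_vec p c i" using Dn by simp
    also have "\<dots> = (P / Q) *\<^sub>R c (i+1)" unfolding r using Dn by (simp add: scaleR_diff_right)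
    finally have s: "inversion (r_vec p c i) (c i) = (P / Q) *\<^sub>R c (i+1)" .
    have "k * (P / Q) = k'" using kP kQ Dn by (simp add: field_simps)
    then show ?thesis unfolding k k' inversion_scale s by simp
  qed
  show ?thesis
    unfolding m_type_darboux_evolution_map_def evolution_map_def
    using M MT DB cc by blast
qed


theorem lemma3p7:
  fixes p mbar :: R32 and f c :: "int \<Rightarrow> R32"
  assumes "lf p p = -1"
    and "discrete_curve p f"
    and "circle_congr_P f c"
    and "\<forall>i. lf (c i) mbar = 0"
    and "\<forall>i. lf (c i) p \<noteq> 0"
    and "\<forall>i. lf (r_vec p c i) (r_vec p c i) \<noteq> 0"
  shows "m_type_darboux_evolution_map p mbar f c (\<lambda>i. inversion (r_vec p c i))
         \<longleftrightarrow> (\<exists>t. tangential_congr f c t)"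
proof -
  have E: "proj_eq (inversion (r_vec p c i) (f i)) (f (i + 1)) \<longleftrightarrow>
    (\<exists>t. in_light_cone t \<and> lf t (f i) = 0 \<and> lf t (f (i+1)) = 0 \<and> lf t (c i) = 0 \<and> lf t (c (i+1)) = 0)"
    for i
  proof -
    have c1: "lf (c (i+1)) (f i) = 0" using assms(3) unfolding circle_congr_P_def
      by (metis add_diff_cancel_right')
    show ?thesis unfolding r_vec_def
      apply (rule edge_iff)
      using assms(2,3,5,6) c1 unfolding discrete_curve_def circle_congr_P_def in_light_cone_def r_vec_def
      by (auto simp: lf_sym[of "f i"] lf_sym[of "f (i+1)"])
  qed
  have "(\<exists>t. tangential_congr f c t) \<longleftrightarrow> (\<forall>i. \<exists>t. in_light_cone t \<and> lf t (f i) = 0 \<and> lf t (f (i+1)) = 0 \<and> lf t (c i) = 0 \<and> lf t (c (i+1)) = 0)"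
    unfolding tangential_congr_def by metis
  then show ?thesis using lhs_iff[OF assms(1,3,4,5,6)] E by simp
qed

end
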